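(* Given any instance and any real number $t\ge1$, let $N^*\subseteq N$ be a $t$-cohesive group and $A$ an allocation satisfying EJR-M. Then the average satisfaction of $N^*$ with respect to $A$ is at least $\lfloor t\rfloor\cdot\left(1-\frac{\lfloor t\rfloor+1}{2t}\right)$.
   Context: Model: There is a set of agents $N=\{1,\dots,n\}$. The resource $R$ consists of a cake $C=[0,c]$ for a real $c\ge 0$ and a set of indivisible goods $G=\{g_1,\dots,g_m\}$ for an integer $m\ge 0$, with $\max(c,m)>0$. A piece of cake is a union of finitely many disjoint closed subintervals of $C$; its length $\ell(\cdot)$ is the sum of the lengths of its intervals. A bundle $R'=(C',G')$ consists of a piece of cake $C'\subseteq C$ and a set $G'\subseteq G$; its size is $s(R')=\ell(C')+|G'|$. Each agent $i$ approves a bundle $R_i=(C_i,G_i)$, and her utility for a bundle $R'$ is $u_i(R')=\ell(C_i\cap C')+|G_i\cap G'|$. A parameter $\alpha\in(0,c+m]$ is given; an allocation is a bundle $A$ with $s(A)\le\alpha$. For a real $t>0$, $N^*\subseteq N$ is $t$-cohesive if $|N^*|\ge t n/\alpha$ and $s(\bigcap_{i\in N^*}R_i)\ge t$. EJR-M: an allocation $A$ satisfies EJR-M if for every real $t>0$ and every $t$-cohesive group $N^*$ for which there exists a bundle $R^*\subseteq R$ with $s(R^* )=t$ and $R^*\subseteq R_i$ for all $i\in N^*$, there is $j\in N^*$ with $u_j(A)\ge t$. The average satisfaction of a group $N'\subseteq N$ with respect to $A$ is $\frac1{|N'|}\sum_{i\in N'}u_i(A)$. *)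

theory Defs
  imports "HOL-Analysis.Analysis"
begin

type_synonym 'g bndl = "real set \<times> 'g set"

definition is_piece :: "real \<Rightarrow> real set \<Rightarrow> bool" where
  "is_piece c P \<longleftrightarrow> (\<exists>I :: (real \<times> real) set. finite I
      \<and> (\<forall>(a,b)\<in>I. 0 \<le> a \<and> a \<le> b \<and> b \<le> c)
      \<and> (\<forall>(a,b)\<in>I. \<forall>(a',b')\<in>I. (a,b) \<noteq> (a',b') \<longrightarrow> {a..b} \<inter> {a'..b'} = {})
      \<and> P = (\<Union>(a,b)\<in>I. {a..b}))"

definition cake_length :: "real set \<Rightarrow> real" where
  "cake_length P = measure lborel P"

definition is_bundle :: "real \<Rightarrow> 'g set \<Rightarrow> 'g bndl \<Rightarrow> bool" where
  "is_bundle c G B \<longleftrightarrow> is_piece c (fst B) \<and> snd B \<subseteq> G"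

definition bsize :: "'g bndl \<Rightarrow> real" where
  "bsize B = cake_length (fst B) + real (card (snd B))"

definition bsubseteq :: "'g bndl \<Rightarrow> 'g bndl \<Rightarrow> bool" where
  "bsubseteq B B' \<longleftrightarrow> fst B \<subseteq> fst B' \<and> snd B \<subseteq> snd B'"

definition binter :: "('a \<Rightarrow> 'g bndl) \<Rightarrow> 'a set \<Rightarrow> 'g bndl" where
  "binter R S = ((\<Inter>i\<in>S. fst (R i)), (\<Inter>i\<in>S. snd (R i)))"

definition utility :: "('a \<Rightarrow> 'g bndl) \<Rightarrow> 'a \<Rightarrow> 'g bndl \<Rightarrow> real" where
  "utility R i B = cake_length (fst (R i) \<inter> fst B) + real (card (snd (R i) \<inter> snd B))"

text \<open>A valid instance: agents N (n = card N \<ge> 1), cake [0,c], goods G (m = card G),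
  approved bundles R, parameter alpha.\<close>
definition valid_instance :: "'a set \<Rightarrow> real \<Rightarrow> 'g set \<Rightarrow> ('a \<Rightarrow> 'g bndl) \<Rightarrow> real \<Rightarrow> bool" where
  "valid_instance N c G R alpha \<longleftrightarrow> finite N \<and> N \<noteq> {} \<and> c \<ge> 0 \<and> finite G
     \<and> max c (real (card G)) > 0
     \<and> 0 < alpha \<and> alpha \<le> c + real (card G)
     \<and> (\<forall>i\<in>N. is_bundle c G (R i))"

definition is_allocation :: "real \<Rightarrow> 'g set \<Rightarrow> real \<Rightarrow> 'g bndl \<Rightarrow> bool" where
  "is_allocation c G alpha A \<longleftrightarrow> is_bundle c G A \<and> bsize A \<le> alpha"

definition cohesive :: "'a set \<Rightarrow> ('a \<Rightarrow> 'g bndl) \<Rightarrow> real \<Rightarrow> real \<Rightarrow> 'a set \<Rightarrow> bool" where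
  "cohesive N R alpha t S \<longleftrightarrow> S \<subseteq> N
     \<and> real (card S) \<ge> t * real (card N) / alpha
     \<and> bsize (binter R S) \<ge> t"

definition EJR_M :: "'a set \<Rightarrow> real \<Rightarrow> 'g set \<Rightarrow> ('a \<Rightarrow> 'g bndl) \<Rightarrow> real \<Rightarrow> 'g bndl \<Rightarrow> bool" where
  "EJR_M N c G R alpha A \<longleftrightarrow>
     (\<forall>t S. t > 0 \<and> cohesive N R alpha t S
        \<and> (\<exists>B. is_bundle c G B \<and> bsize B = t \<and> (\<forall>i\<in>S. bsubseteq B (R i)))
        \<longrightarrow> (\<exists>j\<in>S. utility R j A \<ge> t))"

definition avg_satisfaction :: "('a \<Rightarrow> 'g bndl) \<Rightarrow> 'a set \<Rightarrow> 'g bndl \<Rightarrow> real" where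
  "avg_satisfaction R S A = (\<Sum>i\<in>S. utility R i A) / real (card S)"

end

theory Submission
  imports Defs
begin


definition fu :: "real \<Rightarrow> real set \<Rightarrow> bool" where
 "fu c U \<longleftrightarrow> (\<exists>I::(real\<times>real) set. finite I \<and> (\<forall>(a,b)\<in>I. 0 \<le> a \<and> a \<le> b \<and> b \<le> c)
     \<and> U = (\<Union>(a,b)\<in>I. {a..b}))"

lemma merge_iv:
  fixes a b :: real
  assumes K: "finite K" "\<forall>(p,q)\<in>K. p \<le> q \<and> {p..q} \<inter> {a..b} \<noteq> {}" and ab: "a \<le> b"
  shows "{Min (insert a (fst`K)) .. Max (insert b (snd`K))} = {a..b} \<union> (\<Union>(p,q)\<in>K. {p..q})"
proof
  let ?m = "Min (insert a (fst`K))" and ?M = "Max (insert b (snd`K))"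
  have m1: "?m \<le> a" and M1: "b \<le> ?M" using K by auto
  have m2: "?m \<le> p" "q \<le> ?M" if "(p,q) \<in> K" for p q using K that
    by (auto intro!: Min_le Max_ge simp: image_iff) (metis fst_conv snd_conv)+
  show "{a..b} \<union> (\<Union>(p,q)\<in>K. {p..q}) \<subseteq> {?m..?M}"
  proof
    fix x assume "x \<in> {a..b} \<union> (\<Union>(p,q)\<in>K. {p..q})"
    then show "x \<in> {?m..?M}" using m1 M1 m2 by fastforce
  qed
  show "{?m..?M} \<subseteq> {a..b} \<union> (\<Union>(p,q)\<in>K. {p..q})"
  proof
    fix x assume x: "x \<in> {?m..?M}"
    show "x \<in> {a..b} \<union> (\<Union>(p,q)\<in>K. {p..q})"
    proof (cases "x < a")
      case True
      have "?m \<in> insert a (fst`K)" using K by (intro Min_in) auto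
      moreover have "?m \<noteq> a" using True x by auto
      ultimately obtain p q where pq: "(p,q) \<in> K" "?m = p" by force
      then have "q \<ge> a" using K(2) by fastforce
      then show ?thesis using pq x True by force
    next
      case F: False
      show ?thesis
      proof (cases "x > b")
        case True
        have "?M \<in> insert b (snd`K)" using K by (intro Max_in) auto
        moreover have "?M \<noteq> b" using True x by auto
        ultimately obtain p q where pq: "(p,q) \<in> K" "?M = q" by force
        then have "p \<le> b" using K(2) by fastforce
        then show ?thesis using pq x True by force
      next
        case False then show ?thesis using F by auto
      qed
    qed
  qed
qed

lemma fu_piece_aux:
  fixes c :: real
  assumes "finite I" "\<forall>(a,b)\<in>I. 0 \<le> a \<and> a \<le> b \<and> b \<le> c"
  shows "is_piece c (\<Union>(a,b)\<in>I. {a..b})"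
  using assms
proof (induction I rule: finite_induct)
  case empty
  then show ?case unfolding is_piece_def by (intro exI[of _ "{}"]) auto
next
  case (insert ab I)
  obtain a b where ab: "ab = (a,b)" by force
  from insert obtain J where J: "finite J" "\<forall>(a,b)\<in>J. 0 \<le> a \<and> a \<le> b \<and> b \<le> c"
     "\<forall>(a,b)\<in>J. \<forall>(a',b')\<in>J. (a,b) \<noteq> (a',b') \<longrightarrow> {a..b} \<inter> {a'..b'} = {}"
     "(\<Union>(a,b)\<in>I. {a..b}) = (\<Union>(a,b)\<in>J. {a..b})"
    unfolding is_piece_def by auto
  have abc: "0 \<le> a" "a \<le> b" "b \<le> c" using insert ab by auto
  define K where "K = {(p,q)\<in>J. {p..q} \<inter> {a..b} \<noteq> {}}"
  have KJ: "K \<subseteq> J" unfolding K_def by auto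
  have Kfin: "finite K" using J(1) KJ finite_subset by auto
  have Kp: "\<forall>(p,q)\<in>K. p \<le> q \<and> {p..q} \<inter> {a..b} \<noteq> {}" using J(2) KJ unfolding K_def by auto
  define a' where "a' = Min (insert a (fst`K))"
  define b' where "b' = Max (insert b (snd`K))"
  have mer: "{a'..b'} = {a..b} \<union> (\<Union>(p,q)\<in>K. {p..q})"
    unfolding a'_def b'_def by (rule merge_iv[OF Kfin Kp abc(2)])
  have a'0: "0 \<le> a'" unfolding a'_def using Kfin abc
  proof (subst Min_ge_iff, simp, simp, intro ballI)
    fix x assume "x \<in> insert a (fst ` K)"
    then show "0 \<le> x" using abc J(2) KJ by auto
  qed
  have b'c: "b' \<le> c" unfolding b'_def using Kfin abc
  proof (subst Max_le_iff, simp, simp, intro ballI)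
    fix x assume "x \<in> insert b (snd ` K)"
    then show "x \<le> c" using abc J(2) KJ by auto
  qed
  have a'b': "a' \<le> b'" using mer abc by (metis Un_iff atLeastAtMost_iff atLeastatMost_empty_iff2 empty_iff order_refl) 
  define J' where "J' = insert (a',b') (J - K)"
  have dK: "{p..q} \<inter> {a'..b'} = {}" if "(p,q) \<in> J - K" for p q
  proof -
    have "{p..q} \<inter> {a..b} = {}" using that unfolding K_def by auto
    moreover have "{p..q} \<inter> {p'..q'} = {}" if "(p',q') \<in> K" for p' q'
      using J(3) \<open>(p,q) \<in> J - K\<close> that KJ by fastforce
    ultimately show ?thesis unfolding mer by blast
  qed
  show ?case unfolding is_piece_def
  proof (intro exI[of _ J'] conjI)
    show "finite J'" unfolding J'_def using J(1) by auto
    show "\<forall>(a,b)\<in>J'. 0 \<le> a \<and> a \<le> b \<and> b \<le> c" unfolding J'_def using J(2) a'0 b'c a'b' by auto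
    show "\<forall>(a,b)\<in>J'. \<forall>(a',b')\<in>J'. (a,b) \<noteq> (a',b') \<longrightarrow> {a..b} \<inter> {a'..b'} = {}"
      unfolding J'_def using J(3) dK by (auto simp: Int_commute) 
    have "(\<Union>(a,b)\<in>J'. {a..b}) = {a'..b'} \<union> (\<Union>(a,b)\<in>J-K. {a..b})" unfolding J'_def by auto
    also have "\<dots> = {a..b} \<union> (\<Union>(a,b)\<in>J. {a..b})" unfolding mer using KJ by blast
    finally show "(\<Union>(a,b)\<in>insert ab I. {a..b}) = (\<Union>(a,b)\<in>J'. {a..b})"
      using J(4) ab by auto
  qed
qed

lemma fu_piece: "fu c U \<Longrightarrow> is_piece c U"
  unfolding fu_def using fu_piece_aux by blast

lemma piece_fu: "is_piece c U \<Longrightarrow> fu c U"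
  unfolding fu_def is_piece_def by blast



lemma fu_Int:
  assumes "fu c U" "fu c V" shows "fu c (U \<inter> V)"
proof -
  obtain I where I: "finite I" "\<forall>(a,b)\<in>I. 0 \<le> a \<and> a \<le> b \<and> b \<le> c" "U = (\<Union>(a,b)\<in>I. {a..b})"
    using assms(1) unfolding fu_def by blast
  obtain I' where I': "finite I'" "\<forall>(a,b)\<in>I'. 0 \<le> a \<and> a \<le> b \<and> b \<le> c" "V = (\<Union>(a,b)\<in>I'. {a..b})"
    using assms(2) unfolding fu_def by blast
  have mU: "x \<in> U \<longleftrightarrow> (\<exists>a b. (a,b) \<in> I \<and> a \<le> x \<and> x \<le> b)" for x using I(3) by force
  have mV: "x \<in> V \<longleftrightarrow> (\<exists>a b. (a,b) \<in> I' \<and> a \<le> x \<and> x \<le> b)" for x using I'(3) by force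
  define Q where "Q = {z \<in> I \<times> I'. max (fst (fst z)) (fst (snd z)) \<le> min (snd (fst z)) (snd (snd z))}"
  define F where "F = (\<lambda>z::(real\<times>real)\<times>(real\<times>real). (max (fst (fst z)) (fst (snd z)), min (snd (fst z)) (snd (snd z))))"
  have mW: "x \<in> (\<Union>(a,b)\<in>F ` Q. {a..b}) \<longleftrightarrow> (\<exists>z\<in>Q. fst (F z) \<le> x \<and> x \<le> snd (F z))" for x
    by force
  show ?thesis unfolding fu_def
  proof (intro exI[of _ "F ` Q"] conjI)
    have "Q \<subseteq> I \<times> I'" unfolding Q_def by blast
    then show "finite (F ` Q)" using I(1) I'(1)
      by (meson finite_SigmaI finite_imageI finite_subset)
    show "\<forall>(a,b)\<in>F ` Q. 0 \<le> a \<and> a \<le> b \<and> b \<le> c"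
    proof (intro ballI)
      fix w assume "w \<in> F ` Q"
      then obtain z where z: "z \<in> Q" "w = F z" by blast
      obtain a b a' b' where zz: "z = ((a,b),(a',b'))" by (metis prod.collapse)
      have "(a,b) \<in> I" "(a',b') \<in> I'" "max a a' \<le> min b b'" using z zz unfolding Q_def by auto
      then show "case w of (a,b) \<Rightarrow> 0 \<le> a \<and> a \<le> b \<and> b \<le> c" using I(2) I'(2) z zz
        unfolding F_def by fastforce
    qed
    show "U \<inter> V = (\<Union>(a,b)\<in>F ` Q. {a..b})"
    proof (rule set_eqI)
      fix x
      show "x \<in> U \<inter> V \<longleftrightarrow> x \<in> (\<Union>(a,b)\<in>F ` Q. {a..b})"
      proof
        assume "x \<in> U \<inter> V"
        then obtain a b a' b' where h: "(a,b) \<in> I" "(a',b') \<in> I'" "a \<le> x" "x \<le> b" "a' \<le> x" "x \<le> b'"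
          using mU mV by blast
        then have "((a,b),(a',b')) \<in> Q" unfolding Q_def by auto
        then show "x \<in> (\<Union>(a,b)\<in>F ` Q. {a..b})" unfolding mW
          by (intro bexI[of _ "((a,b),(a',b'))"]) (use h in \<open>auto simp: F_def\<close>)
      next
        assume "x \<in> (\<Union>(a,b)\<in>F ` Q. {a..b})"
        then obtain z where z: "z \<in> Q" "fst (F z) \<le> x" "x \<le> snd (F z)" unfolding mW by blast
        obtain a b a' b' where zz: "z = ((a,b),(a',b'))" by (metis prod.collapse)
        have "(a,b) \<in> I" "(a',b') \<in> I'" using z zz unfolding Q_def by auto
        moreover have "a \<le> x" "x \<le> b" "a' \<le> x" "x \<le> b'" using z(2,3) zz unfolding F_def by auto
        ultimately show "x \<in> U \<inter> V" using mU mV by blast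
      qed
    qed
  qed
qed
lemma fu_Icc: "0 \<le> s \<Longrightarrow> s \<le> c \<Longrightarrow> fu c {0..s}"
  unfolding fu_def by (intro exI[of _ "{(0,s)}"]) auto

lemma fu_compact: "fu c U \<Longrightarrow> compact U"
  unfolding fu_def by (auto intro!: compact_UN)

lemma fu_sub: "fu c U \<Longrightarrow> U \<subseteq> {0..c}"
  unfolding fu_def by fastforce

lemma fu_fmeas: "fu c U \<Longrightarrow> U \<in> fmeasurable lborel"
  by (simp add: fu_compact fmeasurable_compact)

lemma fu_Inter:
  assumes "finite T" "T \<noteq> {}" "\<forall>i\<in>T. fu c (F i)" shows "fu c (\<Inter>i\<in>T. F i)"
  using assms
proof (induction T rule: finite_ne_induct)
  case (singleton x) then show ?case by simp
next
  case (insert x F) then show ?case using fu_Int by auto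
qed

lemma fu_cut:
  assumes U: "fu c U" and x: "0 \<le> x" "x \<le> measure lborel U"
  shows "\<exists>P. is_piece c P \<and> P \<subseteq> U \<and> measure lborel P = x"
proof -
  show ?thesis
  proof (cases "x = 0")
    case True
    have "is_piece c {}" unfolding is_piece_def by (intro exI[of _ "{}"]) auto
    then show ?thesis using True by (intro exI[of _ "{}"]) auto
  next
    case False
  then have "U \<noteq> {}" using x by auto
  then have c0: "0 \<le> c" using fu_sub[OF U] by auto
  define f where "f = (\<lambda>s. measure lborel (U \<inter> {0..s}))"
  have cU: "compact (U \<inter> {0..s})" for s using fu_compact[OF U] by (simp add: compact_Int_closed)
  have mS: "U \<inter> {0..s} \<in> sets borel" for s
    using fmeasurableD[OF fmeasurable_compact[OF cU[of s]]] by simp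
  have lip: "f s' \<le> f s + (s' - s) \<and> f s \<le> f s'" if "s \<le> s'" for s s'
  proof
    have "f s' \<le> measure lborel ((U \<inter> {0..s}) \<union> {s..s'})" unfolding f_def
      by (intro measure_mono_fmeasurable) (auto intro!: fmeasurable_compact compact_Un cU mS)
    also have "\<dots> \<le> f s + measure lborel {s..s'}" unfolding f_def
      by (intro measure_Un_le) (auto intro!: fmeasurable_compact cU mS)
    also have "\<dots> = f s + (s' - s)" using that by simp
    finally show "f s' \<le> f s + (s' - s)" .
    show "f s \<le> f s'" unfolding f_def using that
      by (intro measure_mono_fmeasurable) (auto intro!: fmeasurable_compact cU mS)
  qed
  have cont: "continuous_on {0..c} f"
    unfolding continuous_on_iff
  proof (intro ballI allI impI)
    fix s e assume "s \<in> {0..c}" "(0::real) < e"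
    show "\<exists>d>0. \<forall>s'\<in>{0..c}. dist s' s < d \<longrightarrow> dist (f s') (f s) < e"
    proof (intro exI[of _ e] conjI ballI impI)
      fix s' assume "dist s' s < e"
      then show "dist (f s') (f s) < e"
        using lip[of s s'] lip[of s' s] by (cases "s \<le> s'") (auto simp: dist_real_def)
    qed (simp add: \<open>0 < e\<close>)
  qed
  have f0: "f 0 \<le> x"
  proof -
    have "f 0 \<le> measure lborel {0..0::real}" unfolding f_def
      by (intro measure_mono_fmeasurable) (use mS[of 0] in \<open>auto intro!: fmeasurable_compact\<close>)
    then show ?thesis using x by simp
  qed
  have fc: "x \<le> f c" unfolding f_def using fu_sub[OF U] x by (simp add: Int_absorb2)
  obtain s where s: "0 \<le> s" "s \<le> c" "f s = x" using IVT'[OF f0 fc c0 cont] by auto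
  show ?thesis
  proof (intro exI[of _ "U \<inter> {0..s}"] conjI)
    show "is_piece c (U \<inter> {0..s})" using fu_piece fu_Int[OF U fu_Icc[OF s(1,2)]] by blast
  qed (use s f_def in auto)
qed
qed



lemma cnt_le: "(\<Sum>l\<in>{1..k::nat}. if real l \<le> (u::real) then 1 else 0 :: real) \<le> real k"
  by (rule order_trans[OF sum_mono[of _ _ "\<lambda>_. 1"]]) auto

lemma cnt: "(u::real) \<ge> 0 \<Longrightarrow> (\<Sum>l\<in>{1..k::nat}. if real l \<le> u then 1 else 0 :: real) \<le> u"
proof (induction k)
  case 0 then show ?case by simp
next
  case (Suc k)
  have "{1..Suc k} = insert (Suc k) {1..k}" by auto
  then have e: "(\<Sum>l\<in>{1..Suc k}. if real l \<le> u then 1 else 0 :: real)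
     = (if real (Suc k) \<le> u then 1 else 0) + (\<Sum>l\<in>{1..k}. if real l \<le> u then 1 else 0)" by simp
  show ?case
  proof (cases "real (Suc k) \<le> u")
    case True then show ?thesis unfolding e using cnt_le[where k=k and u=u] by simp
  next
    case False then show ?thesis unfolding e using Suc by simp
  qed
qed

lemma piece_sub: "valid_instance N c G R alpha \<Longrightarrow> i \<in> N \<Longrightarrow> fu c (fst (R i)) \<and> snd (R i) \<subseteq> G"
  unfolding valid_instance_def is_bundle_def using piece_fu by blast

lemma bundle_exists:
  fixes l :: nat
  assumes V: "valid_instance N c G R alpha" and S: "S \<subseteq> N" "S \<noteq> {}"
    and bs: "bsize (binter R S) \<ge> real l"
  shows "\<exists>B. is_bundle c G B \<and> bsize B = real l \<and> (\<forall>i\<in>S. bsubseteq B (R i))"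
proof -
  define C0 where "C0 = (\<Inter>i\<in>S. fst (R i))"
  define g0 where "g0 = (\<Inter>i\<in>S. snd (R i))"
  obtain i0 where i0: "i0 \<in> S" using S by auto
  have fN: "finite N" "finite G" using V unfolding valid_instance_def by auto
  have g0G: "g0 \<subseteq> G" unfolding g0_def using i0 S piece_sub[OF V] by blast
  then have fg0: "finite g0" using fN finite_subset by blast
  have fuC: "fu c C0" unfolding C0_def using S piece_sub[OF V] fN
    by (intro fu_Inter) (auto intro: finite_subset)
  have bsz: "measure lborel C0 + real (card g0) \<ge> real l"
    using bs unfolding bsize_def binter_def cake_length_def C0_def g0_def by simp
  show ?thesis
  proof (cases "card g0 \<ge> l")
    case True
    then obtain g where g: "g \<subseteq> g0" "card g = l" using obtain_subset_with_card_n by metis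
    have "is_piece c {}" unfolding is_piece_def by (intro exI[of _ "{}"]) auto
    then show ?thesis using g g0G unfolding is_bundle_def bsize_def cake_length_def bsubseteq_def g0_def
      by (intro exI[of _ "({}, g)"]) auto
  next
    case False
    obtain P where P: "is_piece c P" "P \<subseteq> C0" "measure lborel P = real l - real (card g0)"
      using fu_cut[OF fuC, of "real l - real (card g0)"] False bsz by auto
    have "\<forall>i\<in>S. g0 \<subseteq> snd (R i) \<and> C0 \<subseteq> fst (R i)" unfolding g0_def C0_def by auto
    then show ?thesis using P g0G unfolding is_bundle_def bsize_def cake_length_def bsubseteq_def
      by (intro exI[of _ "(P, g0)"]) auto
  qed
qed

lemma bsize_mono:
  assumes V: "valid_instance N c G R alpha" and T: "T \<subseteq> N" "T \<noteq> {}"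
    and B: "is_bundle c G B" "\<forall>i\<in>T. bsubseteq B (R i)"
  shows "bsize B \<le> bsize (binter R T)"
proof -
  have fN: "finite N" "finite G" using V unfolding valid_instance_def by auto
  obtain i0 where i0: "i0 \<in> T" using T by auto
  have fuC: "fu c (\<Inter>i\<in>T. fst (R i))" using T piece_sub[OF V] fN
    by (intro fu_Inter) (auto intro: finite_subset)
  have fuB: "fu c (fst B)" using B piece_fu unfolding is_bundle_def by blast
  have "measure lborel (fst B) \<le> measure lborel (\<Inter>i\<in>T. fst (R i))"
    using B(2) fu_fmeas[OF fuC] fu_fmeas[OF fuB]
    by (intro measure_mono_fmeasurable) (auto simp: bsubseteq_def fmeasurableD)
  moreover have "card (snd B) \<le> card (\<Inter>i\<in>T. snd (R i))"
  proof (rule card_mono)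
    show "finite (\<Inter>i\<in>T. snd (R i))" using piece_sub[OF V, of i0] i0 T fN
      by (meson INT_lower finite_subset subsetD)
    show "snd B \<subseteq> (\<Inter>i\<in>T. snd (R i))" using B(2) unfolding bsubseteq_def by auto
  qed
  ultimately show ?thesis unfolding bsize_def binter_def cake_length_def by simp
qed



theorem mainTheorem13:
  fixes N :: "'a set" and G :: "'g set" and R :: "'a \<Rightarrow> 'g bndl"
    and c alpha t :: real and S :: "'a set" and A :: "'g bndl"
  assumes "valid_instance N c G R alpha"
    and "t \<ge> 1"
    and "cohesive N R alpha t S"
    and "is_allocation c G alpha A"
    and "EJR_M N c G R alpha A"
  shows "avg_satisfaction R S A \<ge> of_int \<lfloor>t\<rfloor> * (1 - (of_int \<lfloor>t\<rfloor> + 1) / (2 * t))"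
proof -
  note V = assms(1)
  define u where "u i = utility R i A" for i
  define n where "n = real (card N)"
  define s where "s = real (card S)"
  define k where "k = nat \<lfloor>t\<rfloor>"
  have fN: "finite N" "N \<noteq> {}" and al: "alpha > 0" using V unfolding valid_instance_def by auto
  have n0: "n > 0" unfolding n_def using fN by (simp add: card_gt_0_iff)
  have SN: "S \<subseteq> N" and cS: "s \<ge> t * n / alpha" and bS: "bsize (binter R S) \<ge> t"
    using assms(3) unfolding cohesive_def s_def n_def by auto
  have fS: "finite S" using SN fN finite_subset by blast
  have t0: "t > 0" using assms(2) by simp
  have s0: "s > 0" using cS t0 n0 al by (smt (verit) divide_pos_pos mult_pos_pos)
  have Sne: "S \<noteq> {}" using s0 unfolding s_def by auto
  have kt: "real k = of_int \<lfloor>t\<rfloor>" "real k \<le> t" unfolding k_def using assms(2) by auto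
  have u0: "u i \<ge> 0" for i unfolding u_def utility_def cake_length_def by simp
  have nal: "n / alpha \<le> s / t" using cS t0 al by (simp add: field_simps)
  have key: "real (card {i\<in>S. real l \<le> u i}) \<ge> s - real l * s / t" if l: "l \<in> {1..k}" for l
  proof -
    define T where "T = {i\<in>S. u i < real l}"
    have lt: "real l \<le> t" using l kt(2) by auto
    have lt2: "real (card T) < real l * n / alpha"
    proof (rule ccontr)
      assume "\<not> ?thesis"
      then have ge: "real (card T) \<ge> real l * n / alpha" by simp
      have "real l * n / alpha > 0" using l n0 al by auto
      then have Tne: "T \<noteq> {}" using ge by auto
      have TN: "T \<subseteq> N" using SN unfolding T_def by auto
      obtain B where B: "is_bundle c G B" "bsize B = real l" "\<forall>i\<in>S. bsubseteq B (R i)"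
        using bundle_exists[OF V SN Sne, of l] bS lt by auto
      have BT: "\<forall>i\<in>T. bsubseteq B (R i)" using B(3) unfolding T_def by auto
      have "cohesive N R alpha (real l) T" unfolding cohesive_def
        using TN ge bsize_mono[OF V TN Tne B(1) BT] B(2) n_def by auto
      moreover have "real l > 0" using l by auto
      ultimately obtain j where "j \<in> T" "utility R j A \<ge> real l"
        using assms(5) B BT unfolding EJR_M_def by blast
      then show False unfolding T_def u_def by auto
    qed
    have "card S = card {i\<in>S. real l \<le> u i} + card T"
    proof -
      have "S = {i\<in>S. real l \<le> u i} \<union> T" "{i\<in>S. real l \<le> u i} \<inter> T = {}" unfolding T_def by auto
      then show ?thesis using fS card_Un_disjoint[of "{i\<in>S. real l \<le> u i}" T]
        by (metis (no_types, lifting) finite_Un)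
    qed
    then have "real (card {i\<in>S. real l \<le> u i}) = s - real (card T)" unfolding s_def by simp
    moreover have "real l * n / alpha \<le> real l * s / t" using nal
      by (metis mult_left_mono of_nat_0_le_iff times_divide_eq_right)
    ultimately show ?thesis using lt2 by linarith
  qed
  have "(\<Sum>i\<in>S. u i) \<ge> (\<Sum>i\<in>S. \<Sum>l\<in>{1..k}. if real l \<le> u i then 1 else 0 :: real)"
    by (intro sum_mono cnt u0)
  also have "(\<Sum>i\<in>S. \<Sum>l\<in>{1..k}. if real l \<le> u i then 1 else 0 :: real)
      = (\<Sum>l\<in>{1..k}. \<Sum>i\<in>S. if real l \<le> u i then 1 else 0 :: real)" by (rule sum.swap)
  also have "\<dots> = (\<Sum>l\<in>{1..k}. real (card {i\<in>S. real l \<le> u i}))"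
    by (intro sum.cong refl) (simp add: sum.If_cases fS Int_def)
  finally have "(\<Sum>l\<in>{1..k}. real (card {i\<in>S. real l \<le> u i})) \<le> (\<Sum>i\<in>S. u i)" .
  then have "(\<Sum>i\<in>S. u i) \<ge> (\<Sum>l\<in>{1..k}. s - real l * s / t)"
  proof -
    have "(\<Sum>l\<in>{1..k}. s - real l * s / t) \<le> (\<Sum>l\<in>{1..k}. real (card {i\<in>S. real l \<le> u i}))"
      by (rule sum_mono) (rule key)
    then show ?thesis using \<open>(\<Sum>l\<in>{1..k}. real (card {i\<in>S. real l \<le> u i})) \<le> (\<Sum>i\<in>S. u i)\<close> by linarith
  qed
  also have "(\<Sum>l\<in>{1..k}. s - real l * s / t) = real k * s - s / t * (\<Sum>l\<in>{1..k}. real l)"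
    by (simp add: sum_subtractf sum_distrib_left sum_divide_distrib mult.commute)
  also have "(\<Sum>l\<in>{1..k}. real l) = real k * (real k + 1) / 2"
    by (induction k) (auto simp: field_simps)
  finally have sm: "(\<Sum>i\<in>S. u i) \<ge> real k * s - s / t * (real k * (real k + 1) / 2)" .
  have "avg_satisfaction R S A = (\<Sum>i\<in>S. u i) / s" unfolding avg_satisfaction_def u_def s_def by simp
  also have "(\<Sum>i\<in>S. u i) / s \<ge> (real k * s - s / t * (real k * (real k + 1) / 2)) / s"
    using sm s0 by (simp add: divide_right_mono)
  finally have "avg_satisfaction R S A \<ge> (real k * s - s / t * (real k * (real k + 1) / 2)) / s" .
  moreover have "(real k * s - s / t * (real k * (real k + 1) / 2)) / s = real k * (1 - (real k + 1) / (2 * t))"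
    using s0 t0 by (simp add: field_simps)
  ultimately show ?thesis using kt(1) by simp
qed


end
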